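(* Assume $S\times M\neq\emptyset$, let $(x,\lambda):[t_0,+\infty[\ \to X\times Y$ be a solution of (AHT), and suppose there exists $t_+\ge t_0$ such that $\varepsilon^2(t)+\dot\varepsilon(t)\ge0$ and $2\varepsilon(t)\dot\varepsilon(t)+\ddot\varepsilon(t)\le0$ for all $t\ge t_+$. Then \[ \|(\dot x(t),\dot\lambda(t))\|^2=\mathcal{O}\big(e^{-2\rho(t)}+\varepsilon^2(t)\big)\quad\text{as } t\to+\infty. \]
   Context: $X,Y$ are real Hilbert spaces; $X\times Y$ carries the product inner product and norm $\|\cdot\|$. Standing assumptions: $f:X\to\mathbb{R}$ is convex and continuously differentiable with $\nabla f$ Lipschitz continuous on bounded subsets of $X$; $A:X\to Y$ is linear and continuous with adjoint $A^*$; $b\in Y$; $\varepsilon:[t_0,+\infty[\ \to\ ]0,+\infty[$ ($t_0\ge0$) is twice continuously differentiable with $\lim_{t\to+\infty}\varepsilon(t)=0$. $L(x,\lambda)=f(x)+\langle\lambda,Ax-b\rangle_Y$. $S$ is the set of optimal solutions of $\min\{f(x):Ax=b\}$, $M$ the set of Lagrange multipliers; $S\times M$ is the set of saddle points of $L$. $\rho(t)=\int_{t_0}^t\varepsilon(\tau)\,d\tau$. (AHT) is the system $\dot x+\nabla f(x)+A^*\lambda+\varepsilon(t)x=0$, $\dot\lambda+b-Ax+\varepsilon(t)\lambda=0$; a solution is a continuously differentiable $(x,\lambda):[t_0,+\infty[\ \to X\times Y$ satisfying it on $[t_0,+\infty[$ (existence and uniqueness for every initial datum is assumed). *)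

theory Defs
  imports "HOL-Analysis.Analysis" "HOL-Library.Landau_Symbols"
begin

definition lagrangian ::
  "('a \<Rightarrow> real) \<Rightarrow> ('a \<Rightarrow> 'b::real_inner) \<Rightarrow> 'b \<Rightarrow> 'a \<Rightarrow> 'b \<Rightarrow> real" where
  "lagrangian f A b x l = f x + inner l (A x - b)"

text \<open>Saddle points of L; by the standing assumptions this set equals S x M.\<close>
definition saddle_points ::
  "('a \<Rightarrow> real) \<Rightarrow> ('a \<Rightarrow> 'b::real_inner) \<Rightarrow> 'b \<Rightarrow> ('a \<times> 'b) set" where
  "saddle_points f A b = {(xs, ls). (\<forall>x l. lagrangian f A b xs l \<le> lagrangian f A b xs ls
                                       \<and> lagrangian f A b xs ls \<le> lagrangian f A b x ls)}"

end

theory Submission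
  imports Defs
begin


lemma dini_mono:
  fixes \<phi> :: "real \<Rightarrow> real"
  assumes ab: "a \<le> b" and cont: "continuous_on {a..b} \<phi>"
    and D: "\<And>t \<eta>. t \<in> {a..<b} \<Longrightarrow> \<eta> > 0 \<Longrightarrow> eventually (\<lambda>h. \<phi> (t + h) \<le> \<phi> t + \<eta> * h) (at_right 0)"
  shows "\<phi> b \<le> \<phi> a"
proof -
  have key: "\<phi> b \<le> \<phi> a + \<eta> * (b - a)" if eta: "\<eta> > 0" for \<eta>
  proof -
    define S where "S = {s \<in> {a..b}. \<phi> s - (\<phi> a + \<eta> * (s - a)) \<le> 0}"
    have cS: "closed S"
    proof -
      have cc: "continuous_on {a..b} (\<lambda>s. \<phi> s - (\<phi> a + \<eta> * (s - a)))"
        by (intro continuous_intros cont)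
      have "S = {a..b} \<inter> (\<lambda>s. \<phi> s - (\<phi> a + \<eta> * (s - a))) -` {..0}"
        unfolding S_def by auto
      moreover have "closed ({a..b} \<inter> (\<lambda>s. \<phi> s - (\<phi> a + \<eta> * (s - a))) -` {..0})"
        using continuous_closed_preimage[OF cc closed_atLeastAtMost closed_atMost] .
      ultimately show ?thesis by simp
    qed
    have aS: "a \<in> S" using ab unfolding S_def by auto
    have bdd: "bdd_above S" unfolding S_def by (auto intro: bdd_aboveI[of _ b])
    define c where "c = Sup S"
    have cin: "c \<in> S" unfolding c_def using closed_contains_Sup[OF _ bdd cS] aS by blast
    have cb: "c = b"
    proof (rule ccontr)
      assume "c \<noteq> b"
      with cin have cab: "c \<in> {a..<b}" unfolding S_def by auto
      have e2: "eventually (\<lambda>h. h < b - c) (at_right 0)"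
        unfolding eventually_at_right_field using cab by (intro exI[of _ "b-c"]) auto
      have e3: "eventually (\<lambda>h. h > 0) (at_right (0::real))"
        by (simp add: eventually_at_right_less)
      have ev: "eventually (\<lambda>h. \<phi> (c + h) \<le> \<phi> c + \<eta> * h \<and> h < b - c \<and> h > 0) (at_right 0)"
        using D[OF cab eta] e2 e3 by (intro eventually_conj)
      then obtain h where h: "\<phi> (c + h) \<le> \<phi> c + \<eta> * h" "h < b - c" "h > 0"
        using eventually_happens[OF ev] by auto
      have "c + h \<in> S" using h cin cab unfolding S_def by (auto simp: algebra_simps)
      then have "c + h \<le> c" unfolding c_def using bdd by (rule cSup_upper)
      with h show False by simp
    qed
    show ?thesis using cin cb unfolding S_def by auto
  qed
  show ?thesis
  proof (rule ccontr)
    assume neg: "\<not> ?thesis"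
    define \<eta> where "\<eta> = (\<phi> b - \<phi> a) / (2 * (b - a + 1))"
    have "\<eta> > 0" using neg ab unfolding \<eta>_def by auto
    from key[OF this] have "\<phi> b - \<phi> a \<le> \<eta> * (b - a)" by simp
    also have "\<eta> * (b - a) < \<phi> b - \<phi> a"
    proof -
      have "\<eta> * (b - a) = (\<phi> b - \<phi> a) * ((b - a) / (2 * (b - a + 1)))" unfolding \<eta>_def by simp
      also have "\<dots> < (\<phi> b - \<phi> a) * 1"
        using neg ab by (intro mult_strict_left_mono) (auto simp: field_simps)
      finally show ?thesis by simp
    qed
    finally show False by simp
  qed
qed



lemma vquot:
  fixes Z :: "real \<Rightarrow> 'c::real_normed_vector"
  assumes d: "(Z has_vector_derivative D) (at t within S)" and sub: "{t<..} \<subseteq> S"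
  shows "((\<lambda>h. (1/h) *\<^sub>R (Z (t+h) - Z t)) \<longlongrightarrow> D) (at_right 0)"
proof -
  have "(Z has_vector_derivative D) (at_right t)"
    by (rule has_vector_derivative_within_subset[OF d sub])
  then have "((\<lambda>y. (1 / norm(y - t)) *\<^sub>R (Z y - (Z t + (y - t) *\<^sub>R D))) \<longlongrightarrow> 0) (at_right t)"
    unfolding has_vector_derivative_def has_derivative_within by simp
  then have "((\<lambda>h. (1 / norm(h + t - t)) *\<^sub>R (Z (h + t) - (Z t + (h + t - t) *\<^sub>R D))) \<longlongrightarrow> 0) (at_right 0)"
    by (simp add: filterlim_at_right_to_0[of _ _ t])
  then have "((\<lambda>h. (1 / norm(h + t - t)) *\<^sub>R (Z (h + t) - (Z t + (h + t - t) *\<^sub>R D)) + D) \<longlongrightarrow> 0 + D) (at_right 0)"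
    by (intro tendsto_intros)
  moreover have "eventually (\<lambda>h. (1 / norm(h + t - t)) *\<^sub>R (Z (h + t) - (Z t + (h + t - t) *\<^sub>R D)) + D
       = (1/h) *\<^sub>R (Z (t+h) - Z t)) (at_right 0)"
    using eventually_at_right_less[of "0::real"]
  proof eventually_elim
    case (elim h)
    then show ?case by (simp add: algebra_simps scaleR_diff_right)
  qed
  ultimately show ?thesis by (auto intro: Lim_transform_eventually)
qed

lemma rquot:
  fixes f :: "real \<Rightarrow> real"
  assumes d: "(f has_real_derivative D) (at t within S)" and sub: "{t<..} \<subseteq> S"
  shows "((\<lambda>h. (f (t+h) - f t) / h) \<longlongrightarrow> D) (at_right 0)"
  using vquot[of f D t S] d sub by (simp add: has_real_derivative_iff_has_vector_derivative divide_inverse mult.commute)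

lemma within_ge_local:
  fixes t t0 b :: real
  assumes "t0 \<le> t" "t < b"
  shows "at t within {t0..b} = at t within {t0..}"
  by (rule at_within_nhd[where S="{..<b}"]) (use assms in auto)

lemma rho_deriv:
  fixes e :: "real \<Rightarrow> real"
  assumes c: "continuous_on {t0..} e" and t: "t0 \<le> t"
  shows "((\<lambda>s. integral {t0..s} e) has_real_derivative e t) (at t within {t0..})"
proof -
  have "((\<lambda>s. integral {t0..s} e) has_real_derivative e t) (at t within {t0..t+1})"
    by (rule integral_has_real_derivative) (use c t in \<open>auto intro: continuous_on_subset\<close>)
  then show ?thesis using within_ge_local[of t0 t "t+1"] t by simp
qed

lemma above_tangent:
  fixes f :: "'a::real_inner \<Rightarrow> real"
  assumes cv: "convex_on UNIV f" and d: "(f has_derivative (\<lambda>h. inner g h)) (at x)"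
  shows "f y \<ge> f x + inner g (y - x)"
proof -
  let ?v = "y - x"
  have "((\<lambda>r. x + r *\<^sub>R ?v) has_derivative (\<lambda>r. r *\<^sub>R ?v)) (at 0)"
    by (intro derivative_eq_intros) auto
  then have "((\<lambda>r. f (x + r *\<^sub>R ?v)) has_derivative (\<lambda>k. inner g (k *\<^sub>R ?v))) (at 0)"
    by (rule has_derivative_compose) (simp add: d)
  then have "((\<lambda>r. f (x + r *\<^sub>R ?v)) has_real_derivative inner g ?v) (at 0)"
    unfolding has_field_derivative_def by (rule has_derivative_eq_rhs) (auto simp: fun_eq_iff)
  from rquot[OF this] have lim: "((\<lambda>h. (f (x + h *\<^sub>R ?v) - f x) / h) \<longlongrightarrow> inner g ?v) (at_right 0)"
    by simp
  have ev: "eventually (\<lambda>h. (f (x + h *\<^sub>R ?v) - f x) / h \<le> f y - f x) (at_right 0)"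
    unfolding eventually_at_right_field
  proof (intro exI[of _ 1] conjI allI impI)
    fix h :: real assume h: "0 < h" "h < 1"
    have "f ((1 - h) *\<^sub>R x + h *\<^sub>R y) \<le> (1 - h) * f x + h * f y"
      using cv h unfolding convex_on_def by auto
    moreover have "(1 - h) *\<^sub>R x + h *\<^sub>R y = x + h *\<^sub>R ?v" by (simp add: algebra_simps)
    ultimately have "f (x + h *\<^sub>R ?v) - f x \<le> h * (f y - f x)" by (simp add: algebra_simps)
    then show "(f (x + h *\<^sub>R ?v) - f x) / h \<le> f y - f x" using h by (simp add: divide_le_eq mult.commute)
  qed simp
  have "inner g ?v \<le> f y - f x"
    by (rule tendsto_upperbound[OF lim ev]) simp
  then show ?thesis by simp
qed



lemma sq_deriv:
  fixes Z :: "real \<Rightarrow> 'c::real_inner"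
  assumes "(Z has_vector_derivative D) (at t within S)"
  shows "((\<lambda>s. inner (Z s - c) (Z s - c)) has_real_derivative 2 * inner D (Z t - c)) (at t within S)"
proof -
  have d: "((\<lambda>s. Z s - c) has_derivative (\<lambda>h. h *\<^sub>R D)) (at t within S)"
    using assms unfolding has_vector_derivative_def by (intro derivative_eq_intros) auto
  have "((\<lambda>s. inner (Z s - c) (Z s - c)) has_derivative
      (\<lambda>h. inner (Z t - c) (h *\<^sub>R D) + inner (h *\<^sub>R D) (Z t - c))) (at t within S)"
    by (rule has_derivative_inner[OF d d])
  then show ?thesis unfolding has_field_derivative_def
    by (rule has_derivative_eq_rhs) (auto simp: fun_eq_iff inner_commute)
qed

lemma cont_from_deriv:
  fixes Z Z' :: "real \<Rightarrow> 'c::real_normed_vector"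
  assumes "\<And>t. t \<ge> t0 \<Longrightarrow> (Z has_vector_derivative Z' t) (at t within {t0..})"
  shows "continuous_on {t0..} Z"
  by (auto simp: continuous_on_eq_continuous_within intro!: has_vector_derivative_continuous[OF assms])

lemma traj_bounded:
  fixes F :: "'c::real_inner \<Rightarrow> 'c" and Z Z' :: "real \<Rightarrow> 'c" and eps :: "real \<Rightarrow> real"
  assumes mono: "\<And>u v. inner (F u - F v) (u - v) \<ge> 0"
    and Fzs: "F zs = 0"
    and eps_pos: "\<And>t. t \<ge> t0 \<Longrightarrow> eps t > 0"
    and Zd: "\<And>t. t \<ge> t0 \<Longrightarrow> (Z has_vector_derivative Z' t) (at t within {t0..})"
    and eq: "\<And>t. t \<ge> t0 \<Longrightarrow> Z' t = - F (Z t) - eps t *\<^sub>R Z t"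
    and b: "b \<ge> t0"
  shows "inner (Z b - zs) (Z b - zs) \<le> max (inner (Z t0 - zs) (Z t0 - zs)) (inner zs zs)"
proof -
  define V where "V s = inner (Z s - zs) (Z s - zs)" for s
  define M where "M = max (V t0) (inner zs zs)"
  have Vd: "(V has_real_derivative 2 * inner (Z' t) (Z t - zs)) (at t within {t0..})" if "t \<ge> t0" for t
    unfolding V_def by (rule sq_deriv[OF Zd[OF that]])
  have Vc: "continuous_on {t0..} V"
    by (auto simp: continuous_on_eq_continuous_within intro!: DERIV_continuous[OF Vd])
  have Vneg: "inner (Z' t) (Z t - zs) \<le> 0" if t: "t \<ge> t0" and big: "V t \<ge> inner zs zs" for t
  proof -
    define w where "w = Z t - zs"
    have "inner (Z' t) w = - inner (F (Z t) - F zs) w - eps t * (inner w w + inner zs w)"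
    proof -
      have "Z' t = -(F (Z t) - F zs) - eps t *\<^sub>R (w + zs)"
        using eq[OF t] Fzs unfolding w_def by simp
      then show ?thesis by (subst \<open>Z' t = _\<close>) (simp add: inner_diff_left inner_add_left algebra_simps)
    qed
    moreover have "inner (F (Z t) - F zs) w \<ge> 0" unfolding w_def by (rule mono)
    moreover have "inner w w + inner zs w \<ge> 0"
    proof -
      have "norm w \<ge> norm zs" using big unfolding V_def w_def
        by (simp add: power2_norm_eq_inner[symmetric] power_mono_iff del: power_mono_iff)
           (metis abs_norm_cancel power2_le_imp_le norm_ge_zero)
      moreover have "- inner zs w \<le> norm zs * norm w"
        using norm_cauchy_schwarz[of "-zs" w] by simp
      moreover have "inner w w = norm w * norm w" by (simp add: power2_norm_eq_inner[symmetric] power2_eq_square)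
      ultimately show ?thesis by (smt (verit) mult_right_mono norm_ge_zero)
    qed
    moreover have "eps t > 0" using eps_pos t .
    ultimately have "inner (Z' t) w \<le> 0" by (smt (verit) mult_nonneg_nonneg)
    then show ?thesis unfolding w_def .
  qed
  define \<phi> where "\<phi> s = max (V s) M" for s
  have "\<phi> b \<le> \<phi> t0"
  proof (rule dini_mono[OF b])
    show "continuous_on {t0..b} \<phi>" unfolding \<phi>_def
      by (intro continuous_intros continuous_on_subset[OF Vc]) auto
  next
    fix t \<eta> :: real assume t: "t \<in> {t0..<b}" and eta: "\<eta> > 0"
    have evpos: "eventually (\<lambda>h. h > 0) (at_right (0::real))" by (simp add: eventually_at_right_less)
    show "eventually (\<lambda>h. \<phi> (t + h) \<le> \<phi> t + \<eta> * h) (at_right 0)"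
    proof (cases "V t < M")
      case True
      have "(V \<longlongrightarrow> V t) (at t within {t0..})"
        using Vc t by (auto simp: continuous_on_def)
      then have "(V \<longlongrightarrow> V t) (at_right t)"
        by (rule tendsto_within_subset) (use t in auto)
      from order_tendstoD(2)[OF this True] have "eventually (\<lambda>s. V s < M) (at_right t)" .
      then have "eventually (\<lambda>h. V (h + t) < M) (at_right 0)"
        by (simp add: eventually_at_right_to_0[of _ t])
      then show ?thesis using evpos
        by eventually_elim (use True eta in \<open>auto simp: \<phi>_def add.commute\<close>)
    next
      case False
      then have VM: "V t \<ge> M" by simp
      then have "V t \<ge> inner zs zs" unfolding M_def by simp
      from Vneg[OF _ this] t have le0: "2 * inner (Z' t) (Z t - zs) < \<eta>" using eta by auto
      have "((\<lambda>h. (V (t+h) - V t) / h) \<longlongrightarrow> 2 * inner (Z' t) (Z t - zs)) (at_right 0)"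
        by (rule rquot[OF Vd]) (use t in auto)
      from order_tendstoD(2)[OF this le0]
      have "eventually (\<lambda>h. (V (t+h) - V t) / h < \<eta>) (at_right 0)" .
      then show ?thesis using evpos
      proof eventually_elim
        case (elim h)
        then have "V (t+h) \<le> V t + \<eta> * h" by (simp add: divide_less_eq algebra_simps)
        moreover have "0 \<le> \<eta> * h" using elim eta by simp
        ultimately show ?case using VM unfolding \<phi>_def by auto
      qed
    qed
  qed
  then show ?thesis unfolding \<phi>_def M_def V_def by auto
qed



lemma key_ineq:
  fixes F :: "'c::real_inner \<Rightarrow> 'c"
  assumes mono: "\<And>u v. inner (F u - F v) (u - v) \<ge> 0"
    and h: "h > 0"
    and e1: "Z1' = - F a - e1 *\<^sub>R a" and e0: "Z0' = - F c - e0 *\<^sub>R c"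
  shows "inner Z1' Z1' - inner Z0' Z0' \<le>
     h * (- 2 * e1 * inner ((1/h) *\<^sub>R (a - c)) ((1/h) *\<^sub>R (a - c))
          - 2 * ((e1 - e0) / h) * inner c ((1/h) *\<^sub>R (a - c)))
     + (2 * inner (Z1' - Z0') (Z0' - (1/h) *\<^sub>R (a - c)) + inner (Z1' - Z0') (Z1' - Z0'))"
proof -
  define q where "q = (1/h) *\<^sub>R (a - c)"
  define D where "D = Z1' - Z0'"
  define k where "k = (e1 - e0) / h"
  have aq: "a - c = h *\<^sub>R q" unfolding q_def using h by simp
  have Z1: "Z1' = Z0' + D" unfolding D_def by simp
  have P: "inner Z1' Z1' - inner Z0' Z0' = 2 * inner D q + 2 * inner D (Z0' - q) + inner D D"
    unfolding Z1 by (simp add: inner_add_left inner_add_right inner_diff_right inner_commute algebra_simps)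
  have Dexp: "D = - (F a - F c) - (h * e1) *\<^sub>R q - (h * ((e1 - e0) / h)) *\<^sub>R c"
  proof -
    have "D = - (F a - F c) - (e1 *\<^sub>R (a - c) + (e1 - e0) *\<^sub>R c)"
      unfolding D_def e1 e0 by (simp add: algebra_simps)
    also have "\<dots> = - (F a - F c) - (h * e1) *\<^sub>R q - (h * ((e1 - e0) / h)) *\<^sub>R c"
    proof -
      have hh: "h * ((e1 - e0) / h) = e1 - e0" using h by simp
      show ?thesis unfolding aq hh by (simp add: algebra_simps)
    qed
    finally show ?thesis .
  qed
  have m: "inner (F a - F c) q \<ge> 0"
  proof -
    have "inner (F a - F c) q = (1/h) * inner (F a - F c) (a - c)" unfolding q_def by simp
    then show ?thesis using mono[of a c] h by simp
  qed
  have "inner D q = - inner (F a - F c) q - h * e1 * inner q q - h * ((e1 - e0) / h) * inner c q"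
    unfolding Dexp by (simp only: inner_diff_left inner_minus_left inner_scaleR_left)
  then have "inner D q \<le> - h * e1 * inner q q - h * ((e1 - e0) / h) * inner c q"
    using m by simp
  then have iq: "inner D q \<le> - h * e1 * inner q q - h * k * inner c q" unfolding k_def .
  show ?thesis unfolding P q_def[symmetric] D_def[symmetric] k_def[symmetric]
    using iq by (simp add: algebra_simps)
qed



lemma shift_tendsto:
  fixes t :: real
  assumes "(f \<longlongrightarrow> l) (at t within S)" "{t<..} \<subseteq> S"
  shows "((\<lambda>h. f (t + h)) \<longlongrightarrow> l) (at_right 0)"
proof -
  have "(f \<longlongrightarrow> l) (at_right t)" by (rule tendsto_within_subset[OF assms])
  then show ?thesis by (simp add: filterlim_at_right_to_0[of _ _ t] add.commute)
qed

lemma psi_mono: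
  fixes F :: "'c::real_inner \<Rightarrow> 'c" and Z Z' :: "real \<Rightarrow> 'c" and eps eps' eps'' :: "real \<Rightarrow> real"
  assumes mono: "\<And>u v. inner (F u - F v) (u - v) \<ge> 0"
    and eps_pos: "\<And>t. t \<ge> t0 \<Longrightarrow> eps t > 0"
    and eps_d1: "\<And>t. t \<ge> t0 \<Longrightarrow> (eps has_real_derivative eps' t) (at t within {t0..})"
    and eps_d2: "\<And>t. t \<ge> t0 \<Longrightarrow> (eps' has_real_derivative eps'' t) (at t within {t0..})"
    and Zd: "\<And>t. t \<ge> t0 \<Longrightarrow> (Z has_vector_derivative Z' t) (at t within {t0..})"
    and Z'c: "continuous_on {t0..} Z'"
    and eq: "\<And>t. t \<ge> t0 \<Longrightarrow> Z' t = - F (Z t) - eps t *\<^sub>R Z t"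
    and lip: "\<And>t. t \<ge> t0 \<Longrightarrow> \<exists>K. eventually (\<lambda>h. norm (Z' (t+h) - Z' t) \<le> K * h) (at_right 0)"
    and tp: "tp \<ge> t0" and cond: "\<And>t. t \<ge> tp \<Longrightarrow> 2 * eps t * eps' t + eps'' t \<le> 0"
    and b: "b \<ge> tp"
  shows "exp (2 * integral {t0..b} eps) * (inner (Z' b) (Z' b) + eps' b * inner (Z b) (Z b))
      \<le> exp (2 * integral {t0..tp} eps) * (inner (Z' tp) (Z' tp) + eps' tp * inner (Z tp) (Z tp))"
proof -
  define E where "E s = exp (2 * integral {t0..s} eps)" for s
  define P where "P s = inner (Z' s) (Z' s)" for s
  define N where "N s = inner (Z s) (Z s)" for s
  define \<psi> where "\<psi> s = E s * (P s + eps' s * N s)" for s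
  have epsc: "continuous_on {t0..} eps"
    by (auto simp: continuous_on_eq_continuous_within intro!: DERIV_continuous[OF eps_d1])
  have eps'c: "continuous_on {t0..} eps'"
    by (auto simp: continuous_on_eq_continuous_within intro!: DERIV_continuous[OF eps_d2])
  have Zc: "continuous_on {t0..} Z" by (rule cont_from_deriv[OF Zd])
  have Ed: "(E has_real_derivative E t * (2 * eps t)) (at t within {t0..})" if "t \<ge> t0" for t
    unfolding E_def
    by (rule derivative_eq_intros rho_deriv[OF epsc that] | simp)+
  have Nd: "(N has_real_derivative 2 * inner (Z' t) (Z t)) (at t within {t0..})" if "t \<ge> t0" for t
    using sq_deriv[OF Zd[OF that], of 0] unfolding N_def by simp
  have EQd: "((\<lambda>s. E s * (eps' s * N s)) has_real_derivative
      E t * (2 * eps t) * (eps' t * N t) + E t * (eps'' t * N t + eps' t * (2 * inner (Z' t) (Z t))))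
      (at t within {t0..})" if "t \<ge> t0" for t
    by (rule derivative_eq_intros Ed[OF that] eps_d2[OF that] Nd[OF that] | simp)+
  have Ec: "continuous_on {t0..} E"
    by (auto simp: continuous_on_eq_continuous_within intro!: DERIV_continuous[OF Ed])
  have psic: "continuous_on {t0..} \<psi>" unfolding \<psi>_def P_def N_def
    by (intro continuous_intros Ec Z'c eps'c Zc)
  have "\<psi> b \<le> \<psi> tp"
  proof (rule dini_mono[OF b])
    show "continuous_on {tp..b} \<psi>" by (rule continuous_on_subset[OF psic]) (use tp in auto)
  next
    fix t \<eta> :: real assume t: "t \<in> {tp..<b}" and eta: "\<eta> > 0"
    have t0t: "t \<ge> t0" using t tp by auto
    have sub: "{t<..} \<subseteq> {t0..}" using t0t by auto
    have evpos: "eventually (\<lambda>h. h > 0) (at_right (0::real))" by (simp add: eventually_at_right_less)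
    obtain K where K: "eventually (\<lambda>h. norm (Z' (t+h) - Z' t) \<le> K * h) (at_right 0)"
      using lip[OF t0t] by blast
    define q where "q h = (1/h) *\<^sub>R (Z (t+h) - Z t)" for h
    define de where "de h = (eps (t+h) - eps t) / h" for h
    define dE where "dE h = (E (t+h) - E t) / h" for h
    define dEQ where "dEQ h = (E (t+h) * (eps' (t+h) * N (t+h)) - E t * (eps' t * N t)) / h" for h
    define D where "D h = Z' (t+h) - Z' t" for h
    define err where "err h = (2 * inner (D h) (Z' t - q h) + inner (D h) (D h)) / h" for h
    define R where "R h = - 2 * eps (t+h) * inner (q h) (q h) - 2 * de h * inner (Z t) (q h) + err h" for h
    define G where "G h = E (t+h) * R h + P t * dE h + dEQ h" for h
    have q_lim: "(q \<longlongrightarrow> Z' t) (at_right 0)"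
      unfolding q_def by (rule vquot[OF Zd[OF t0t] sub])
    have de_lim: "(de \<longlongrightarrow> eps' t) (at_right 0)"
      unfolding de_def by (rule rquot[OF eps_d1[OF t0t] sub])
    have dE_lim: "(dE \<longlongrightarrow> E t * (2 * eps t)) (at_right 0)"
      unfolding dE_def by (rule rquot[OF Ed[OF t0t] sub])
    have dEQ_lim: "(dEQ \<longlongrightarrow> E t * (2 * eps t) * (eps' t * N t) + E t * (eps'' t * N t + eps' t * (2 * inner (Z' t) (Z t)))) (at_right 0)"
      unfolding dEQ_def by (rule rquot[OF EQd[OF t0t] sub])
    have E_lim: "((\<lambda>h. E (t+h)) \<longlongrightarrow> E t) (at_right 0)"
      by (rule shift_tendsto[OF _ sub]) (use Ec t0t in \<open>auto simp: continuous_on_def\<close>)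
    have eps_lim: "((\<lambda>h. eps (t+h)) \<longlongrightarrow> eps t) (at_right 0)"
      by (rule shift_tendsto[OF _ sub]) (use epsc t0t in \<open>auto simp: continuous_on_def\<close>)
    have err_lim: "(err \<longlongrightarrow> 0) (at_right 0)"
    proof (rule Lim_null_comparison)
      show "eventually (\<lambda>h. norm (err h) \<le> 2 * K * norm (Z' t - q h) + K * K * h) (at_right 0)"
        using K evpos
      proof eventually_elim
        case (elim h)
        have Dn: "norm (D h) \<le> K * h" using elim(1) unfolding D_def .
        have a1: "\<bar>inner (D h) (Z' t - q h)\<bar> \<le> K * h * norm (Z' t - q h)"
          using Cauchy_Schwarz_ineq2[of "D h" "Z' t - q h"] Dn
          by (meson mult_right_mono norm_ge_zero order_trans)
        have a2: "inner (D h) (D h) \<le> (K * h) * (K * h)"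
          using Dn by (simp add: power2_norm_eq_inner[symmetric] power2_eq_square mult_mono')
        have a3: "inner (D h) (D h) \<ge> 0" by simp
        have "\<bar>2 * inner (D h) (Z' t - q h) + inner (D h) (D h)\<bar> \<le> h * (2 * K * norm (Z' t - q h) + K * K * h)"
        proof -
          have gen: "\<And>x y A B::real. \<bar>x\<bar> \<le> A \<Longrightarrow> 0 \<le> y \<Longrightarrow> y \<le> B \<Longrightarrow> \<bar>2*x+y\<bar> \<le> 2*A + B" by arith
          from gen[OF a1 a3 a2] show ?thesis by (simp add: algebra_simps)
        qed
        then show ?case unfolding err_def using elim(2) by (simp add: abs_divide divide_le_eq mult.commute)
      qed
      have "((\<lambda>h. 2 * K * norm (Z' t - q h) + K * K * h) \<longlongrightarrow> 2 * K * norm (Z' t - Z' t) + K * K * 0) (at_right 0)"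
        by (intro tendsto_intros q_lim)
      then show "((\<lambda>h. 2 * K * norm (Z' t - q h) + K * K * h) \<longlongrightarrow> 0) (at_right 0)" by simp
    qed
    define L where "L = E t * (-2 * eps t * inner (Z' t) (Z' t) - 2 * eps' t * inner (Z t) (Z' t) + 0)
        + P t * (E t * (2 * eps t)) + (E t * (2 * eps t) * (eps' t * N t) + E t * (eps'' t * N t + eps' t * (2 * inner (Z' t) (Z t))))"
    have G_lim: "(G \<longlongrightarrow> L) (at_right 0)"
      unfolding G_def R_def L_def
      by (intro tendsto_intros E_lim eps_lim q_lim de_lim err_lim dE_lim dEQ_lim)
    have L_le: "L \<le> 0"
    proof -
      have "L = E t * (2 * eps t * eps' t + eps'' t) * N t"
        unfolding L_def P_def by (simp add: algebra_simps inner_commute)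
      moreover have "E t > 0" unfolding E_def by simp
      moreover have "N t \<ge> 0" unfolding N_def by simp
      moreover have "2 * eps t * eps' t + eps'' t \<le> 0" using cond t by auto
      ultimately show ?thesis by (simp add: mult_nonneg_nonpos2 mult_nonpos_nonneg mult_le_0_iff)
    qed
    have "eventually (\<lambda>h. G h < \<eta>) (at_right 0)"
      using order_tendstoD(2)[OF G_lim] L_le eta by simp
    then show "eventually (\<lambda>h. \<psi> (t + h) \<le> \<psi> t + \<eta> * h) (at_right 0)"
      using evpos
    proof eventually_elim
      case (elim h)
      have h: "h > 0" using elim by simp
      have e1: "Z' (t+h) = - F (Z (t+h)) - eps (t+h) *\<^sub>R Z (t+h)" using eq t0t h by simp
      have e0: "Z' t = - F (Z t) - eps t *\<^sub>R Z t" using eq t0t by simp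
      have ki0: "P (t+h) - P t \<le> h * (-2 * eps (t+h) * inner (q h) (q h) - 2 * de h * inner (Z t) (q h))
          + (2 * inner (D h) (Z' t - q h) + inner (D h) (D h))"
        using key_ineq[OF mono h e1 e0] unfolding P_def q_def D_def de_def by simp
      have hR: "h * R h = h * (-2 * eps (t+h) * inner (q h) (q h) - 2 * de h * inner (Z t) (q h))
          + (2 * inner (D h) (Z' t - q h) + inner (D h) (D h))"
        unfolding R_def err_def using h by (simp only: distrib_left) simp
      have ki: "P (t+h) - P t \<le> h * R h" using ki0 hR by simp
      have Epos: "E (t+h) > 0" unfolding E_def by simp
      have "\<psi> (t+h) - \<psi> t = E (t+h) * (P (t+h) - P t) + h * (P t * dE h) + h * dEQ h"
      proof -
        have 1: "h * dE h = E (t+h) - E t" unfolding dE_def using h by simp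
        have 2: "h * dEQ h = E (t+h) * (eps' (t+h) * N (t+h)) - E t * (eps' t * N t)"
          unfolding dEQ_def using h by simp
        show ?thesis unfolding \<psi>_def mult.left_commute[of h "P t"] 1 2 by (simp add: algebra_simps)
      qed
      also have "\<dots> \<le> E (t+h) * (h * R h) + h * (P t * dE h) + h * dEQ h"
        using ki Epos by simp
      also have "\<dots> = h * G h" unfolding G_def by (simp add: algebra_simps)
      also have "\<dots> \<le> h * \<eta>" using elim h by simp
      finally show ?case by (simp add: algebra_simps)
    qed
  qed
  then show ?thesis unfolding \<psi>_def E_def P_def N_def .
qed



lemma abstract_bound:
  fixes F :: "'c::real_inner \<Rightarrow> 'c" and Z Z' :: "real \<Rightarrow> 'c" and eps eps' eps'' :: "real \<Rightarrow> real"
  assumes mono: "\<And>u v. inner (F u - F v) (u - v) \<ge> 0"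
    and Fzs: "F zs = 0"
    and eps_pos: "\<And>t. t \<ge> t0 \<Longrightarrow> eps t > 0"
    and eps_d1: "\<And>t. t \<ge> t0 \<Longrightarrow> (eps has_real_derivative eps' t) (at t within {t0..})"
    and eps_d2: "\<And>t. t \<ge> t0 \<Longrightarrow> (eps' has_real_derivative eps'' t) (at t within {t0..})"
    and Zd: "\<And>t. t \<ge> t0 \<Longrightarrow> (Z has_vector_derivative Z' t) (at t within {t0..})"
    and Z'c: "continuous_on {t0..} Z'"
    and eq: "\<And>t. t \<ge> t0 \<Longrightarrow> Z' t = - F (Z t) - eps t *\<^sub>R Z t"
    and lip: "\<And>t. t \<ge> t0 \<Longrightarrow> \<exists>K. eventually (\<lambda>h. norm (Z' (t+h) - Z' t) \<le> K * h) (at_right 0)"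
    and eps_cond: "\<exists>tp\<ge>t0. \<forall>t\<ge>tp. (eps t)\<^sup>2 + eps' t \<ge> 0 \<and> 2 * eps t * eps' t + eps'' t \<le> 0"
  shows "(\<lambda>t. (norm (Z' t))\<^sup>2) \<in> O[at_top](\<lambda>t. exp (- 2 * integral {t0..t} eps) + (eps t)\<^sup>2)"
proof -
  obtain tp where tp: "tp \<ge> t0" and c: "\<And>t. t \<ge> tp \<Longrightarrow> (eps t)\<^sup>2 + eps' t \<ge> 0 \<and> 2 * eps t * eps' t + eps'' t \<le> 0"
    using eps_cond by blast
  define R2 where "R2 = max (inner (Z t0 - zs) (Z t0 - zs)) (inner zs zs)"
  define B where "B = sqrt R2 + norm zs"
  have Nb: "inner (Z t) (Z t) \<le> B\<^sup>2" if "t \<ge> t0" for t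
  proof -
    have "inner (Z t - zs) (Z t - zs) \<le> R2"
      unfolding R2_def by (rule traj_bounded[OF mono Fzs eps_pos Zd eq that])
    then have "norm (Z t - zs) \<le> sqrt R2" by (simp add: norm_eq_sqrt_inner)
    then have "norm (Z t) \<le> B" unfolding B_def using norm_triangle_sub[of "Z t" zs] by linarith
    then show ?thesis by (simp add: power2_norm_eq_inner[symmetric] power_mono)
  qed
  define C0 where "C0 = exp (2 * integral {t0..tp} eps) * (inner (Z' tp) (Z' tp) + eps' tp * inner (Z tp) (Z tp))"
  define c where "c = max (max C0 0) (B\<^sup>2)"
  have "eventually (\<lambda>t. norm ((norm (Z' t))\<^sup>2) \<le> c * norm (exp (- 2 * integral {t0..t} eps) + (eps t)\<^sup>2)) at_top"
    unfolding eventually_at_top_linorder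
  proof (intro exI[of _ tp] allI impI)
    fix t assume t: "t \<ge> tp"
    have t0t: "t \<ge> t0" using t tp by simp
    define E where "E = exp (2 * integral {t0..t} eps)"
    have Epos: "E > 0" unfolding E_def by simp
    have Einv: "exp (- 2 * integral {t0..t} eps) = 1 / E" unfolding E_def by (simp add: exp_minus field_simps)
    have psi: "E * (inner (Z' t) (Z' t) + eps' t * inner (Z t) (Z t)) \<le> C0"
      unfolding E_def C0_def
      by (rule psi_mono[OF mono eps_pos eps_d1 eps_d2 Zd Z'c eq lip tp _ t]) (use c in auto)
    then have "inner (Z' t) (Z' t) + eps' t * inner (Z t) (Z t) \<le> C0 / E"
      using Epos by (simp add: field_simps mult.commute)
    moreover have "C0 / E \<le> max C0 0 * (1 / E)" using Epos by (simp add: divide_right_mono)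
    moreover have "- eps' t * inner (Z t) (Z t) \<le> (eps t)\<^sup>2 * B\<^sup>2"
    proof -
      have "- eps' t \<le> (eps t)\<^sup>2" using c[OF t] by simp
      moreover have "inner (Z t) (Z t) \<ge> 0" by simp
      ultimately have "- eps' t * inner (Z t) (Z t) \<le> (eps t)\<^sup>2 * inner (Z t) (Z t)"
        by (rule mult_right_mono)
      also have "\<dots> \<le> (eps t)\<^sup>2 * B\<^sup>2" using Nb[OF t0t] by (simp add: mult_left_mono)
      finally show ?thesis .
    qed
    ultimately have "inner (Z' t) (Z' t) \<le> max C0 0 * (1 / E) + B\<^sup>2 * (eps t)\<^sup>2"
      by (simp add: algebra_simps)
    also have "\<dots> \<le> c * (1 / E) + c * (eps t)\<^sup>2"
      unfolding c_def using Epos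
      by (intro add_mono mult_right_mono) auto
    finally have "inner (Z' t) (Z' t) \<le> c * (1 / E + (eps t)\<^sup>2)" by (simp add: algebra_simps)
    then show "norm ((norm (Z' t))\<^sup>2) \<le> c * norm (exp (- 2 * integral {t0..t} eps) + (eps t)\<^sup>2)"
    proof -
      have n1: "norm ((norm (Z' t))\<^sup>2) = inner (Z' t) (Z' t)" by (simp add: power2_norm_eq_inner)
      have n2: "norm (1 / E + (eps t)\<^sup>2) = 1 / E + (eps t)\<^sup>2" using Epos by simp
      show ?thesis unfolding n1 Einv n2 by fact
    qed
  qed
  then show ?thesis by (rule bigoI)
qed



lemma lip_from:
  fixes F :: "'c::real_inner \<Rightarrow> 'c" and Z Z' :: "real \<Rightarrow> 'c" and eps eps' :: "real \<Rightarrow> real"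
  assumes t0t: "t \<ge> t0" and KF: "KF \<ge> 0"
    and Fl: "\<And>a. norm (a - Z t) \<le> 1 \<Longrightarrow> norm (F a - F (Z t)) \<le> KF * norm (a - Z t)"
    and Zd: "\<And>t. t \<ge> t0 \<Longrightarrow> (Z has_vector_derivative Z' t) (at t within {t0..})"
    and eps_d1: "\<And>t. t \<ge> t0 \<Longrightarrow> (eps has_real_derivative eps' t) (at t within {t0..})"
    and eq: "\<And>t. t \<ge> t0 \<Longrightarrow> Z' t = - F (Z t) - eps t *\<^sub>R Z t"
  shows "\<exists>K. eventually (\<lambda>h. norm (Z' (t+h) - Z' t) \<le> K * h) (at_right 0)"
proof -
  have sub: "{t<..} \<subseteq> {t0..}" using t0t by auto
  define q where "q h = (1/h) *\<^sub>R (Z (t+h) - Z t)" for h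
  define de where "de h = (eps (t+h) - eps t) / h" for h
  define Mq where "Mq = norm (Z' t) + 1"
  define Me where "Me = \<bar>eps' t\<bar> + 1"
  have Mq: "Mq > 0" unfolding Mq_def by (simp add: add_nonneg_pos)
  have Me: "Me > 0" unfolding Me_def by (simp add: add_nonneg_pos)
  have q_lim: "(q \<longlongrightarrow> Z' t) (at_right 0)"
    unfolding q_def by (rule vquot[OF Zd[OF t0t] sub])
  have de_lim: "(de \<longlongrightarrow> eps' t) (at_right 0)"
    unfolding de_def by (rule rquot[OF eps_d1[OF t0t] sub])
  have ev1: "eventually (\<lambda>h. norm (q h) < Mq) (at_right 0)"
    unfolding Mq_def by (rule order_tendstoD(2)[OF tendsto_norm[OF q_lim]]) simp
  have ev2: "eventually (\<lambda>h. \<bar>de h\<bar> < Me) (at_right 0)"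
    unfolding Me_def by (rule order_tendstoD(2)[OF tendsto_rabs[OF de_lim]]) simp
  have ev3: "eventually (\<lambda>h. h < min 1 (1 / Mq)) (at_right (0::real))"
    unfolding eventually_at_right_field using Mq by (intro exI[of _ "min 1 (1/Mq)"]) auto
  have evpos: "eventually (\<lambda>h. h > 0) (at_right (0::real))" by (simp add: eventually_at_right_less)
  define K where "K = KF * Mq + (\<bar>eps t\<bar> + Me) * Mq + Me * norm (Z t)"
  have "eventually (\<lambda>h. norm (Z' (t+h) - Z' t) \<le> K * h) (at_right 0)"
    using ev1 ev2 ev3 evpos
  proof eventually_elim
    case (elim h)
    define a where "a = Z (t+h)"
    define c where "c = Z t"
    have h: "h > 0" "h < 1" "h < 1 / Mq" using elim by auto
    have ac: "a - c = h *\<^sub>R q h" unfolding a_def c_def q_def using h by simp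
    have nac: "norm (a - c) \<le> h * Mq" unfolding ac using elim h by simp
    have nac1: "norm (a - c) \<le> 1"
    proof -
      have "h * Mq \<le> 1" using h Mq by (simp add: pos_less_divide_eq less_imp_le)
      then show ?thesis using nac by simp
    qed
    have ed: "eps (t+h) - eps t = h * de h" unfolding de_def using h by simp
    have ned: "\<bar>eps (t+h) - eps t\<bar> \<le> h * Me" unfolding ed using elim h by (simp add: abs_mult)
    have ne1: "\<bar>eps (t+h)\<bar> \<le> \<bar>eps t\<bar> + Me"
    proof -
      have "h * Me \<le> Me" using h Me by simp
      then show ?thesis using ned by linarith
    qed
    have Zdiff: "Z' (t+h) - Z' t = - (F a - F c) - (eps (t+h) *\<^sub>R (a - c) + (eps (t+h) - eps t) *\<^sub>R c)"
    proof -
      have e1: "Z' (t+h) = - F a - eps (t+h) *\<^sub>R a" unfolding a_def using eq[of "t+h"] t0t h by simp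
      have e0: "Z' t = - F c - eps t *\<^sub>R c" unfolding c_def using eq[of t] t0t by simp
      show ?thesis unfolding e1 e0 by (simp add: algebra_simps)
    qed
    have "norm (Z' (t+h) - Z' t) \<le> norm (F a - F c) + (\<bar>eps (t+h)\<bar> * norm (a - c) + \<bar>eps (t+h) - eps t\<bar> * norm c)"
      unfolding Zdiff
    proof (rule order_trans[OF norm_triangle_ineq4], rule add_mono)
      show "norm (- (F a - F c)) \<le> norm (F a - F c)" by (simp only: norm_minus_cancel order_refl)
      show "norm (eps (t + h) *\<^sub>R (a - c) + (eps (t + h) - eps t) *\<^sub>R c)
        \<le> \<bar>eps (t+h)\<bar> * norm (a - c) + \<bar>eps (t+h) - eps t\<bar> * norm c"
        by (rule order_trans[OF norm_triangle_ineq]) simp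
    qed
    also have "\<dots> \<le> KF * (h * Mq) + ((\<bar>eps t\<bar> + Me) * (h * Mq) + (h * Me) * norm c)"
    proof (intro add_mono mult_mono)
      show "norm (F a - F c) \<le> KF * (h * Mq)"
        using Fl[of a] nac1 nac KF unfolding c_def by (meson mult_left_mono order_trans)
    qed (use nac ne1 ned Me Mq h in auto)
    also have "\<dots> = K * h" unfolding K_def c_def by (simp add: algebra_simps)
    finally show ?case .
  qed
  then show ?thesis by blast
qed



lemma adj_bound:
  fixes A :: "'a::real_inner \<Rightarrow> 'b::real_inner"
  assumes A_lin: "bounded_linear A" and A_adj: "\<And>u v. inner (A u) v = inner u (Astar v)"
  obtains KA where "KA > 0" "\<And>u. norm (A u) \<le> norm u * KA"
    "\<And>v1 v2. norm (Astar v1 - Astar v2) \<le> KA * norm (v1 - v2)"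
proof -
  obtain KA where KA: "KA > 0" "\<And>u. norm (A u) \<le> norm u * KA"
    using bounded_linear.pos_bounded[OF A_lin] by blast
  have "norm (Astar v1 - Astar v2) \<le> KA * norm (v1 - v2)" for v1 v2
  proof -
    define w where "w = Astar v1 - Astar v2"
    have "inner (A w) (v1 - v2) = inner w (Astar v1) - inner w (Astar v2)"
      by (simp add: inner_diff_right A_adj)
    then have "inner w w = inner (A w) (v1 - v2)"
      unfolding w_def by (simp add: inner_diff_right)
    also have "\<dots> \<le> norm (A w) * norm (v1 - v2)" by (rule norm_cauchy_schwarz)
    also have "\<dots> \<le> norm w * KA * norm (v1 - v2)" using KA(2)[of w] by (simp add: mult_right_mono)
    finally have "norm w * norm w \<le> norm w * (KA * norm (v1 - v2))"
      by (simp add: power2_norm_eq_inner[symmetric] power2_eq_square algebra_simps)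
    then have "norm w \<le> KA * norm (v1 - v2)" if "norm w > 0" using that by simp
    moreover have "norm w = 0 \<Longrightarrow> norm w \<le> KA * norm (v1 - v2)" using KA by simp
    moreover have "norm w = 0 \<or> norm w > 0" by auto
    ultimately show ?thesis unfolding w_def by blast
  qed
  then show ?thesis using KA that by blast
qed

lemma F_mono:
  fixes gradf :: "'a::real_inner \<Rightarrow> 'a" and A :: "'a \<Rightarrow> 'b::real_inner"
  assumes f_convex: "convex_on UNIV f"
    and f_grad: "\<And>u. (f has_derivative (\<lambda>h. inner (gradf u) h)) (at u)"
    and A_lin: "bounded_linear A" and A_adj: "\<And>u v. inner (A u) v = inner u (Astar v)"
  shows "inner ((gradf u1 + Astar v1, b - A u1) - (gradf u2 + Astar v2, b - A u2)) ((u1, v1) - (u2, v2)) \<ge> 0"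
proof -
  have g1: "f u2 \<ge> f u1 + inner (gradf u1) (u2 - u1)" by (rule above_tangent[OF f_convex f_grad])
  have g2: "f u1 \<ge> f u2 + inner (gradf u2) (u1 - u2)" by (rule above_tangent[OF f_convex f_grad])
  have gm: "inner (gradf u1 - gradf u2) (u1 - u2) \<ge> 0"
    using g1 g2 by (simp add: inner_diff_left inner_diff_right algebra_simps)
  have lin: "A u1 - A u2 = A (u1 - u2)" using A_lin by (simp add: linear_diff bounded_linear.linear)
  have c: "inner (Astar v1 - Astar v2) (u1 - u2) = inner (A (u1 - u2)) (v1 - v2)"
  proof -
    have "inner (A (u1 - u2)) (v1 - v2) = inner (u1 - u2) (Astar v1) - inner (u1 - u2) (Astar v2)"
      by (simp add: inner_diff_right A_adj)
    moreover have "inner (Astar v1 - Astar v2) (u1 - u2) = inner (u1 - u2) (Astar v1 - Astar v2)"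
      by (rule inner_commute)
    ultimately show ?thesis by (simp only: inner_diff_right)
  qed
  have "inner ((gradf u1 + Astar v1, b - A u1) - (gradf u2 + Astar v2, b - A u2)) ((u1, v1) - (u2, v2))
      = inner (gradf u1 - gradf u2) (u1 - u2) + inner (Astar v1 - Astar v2) (u1 - u2)
        - inner (A u1 - A u2) (v1 - v2)"
    by (simp add: inner_diff_left inner_diff_right inner_add_left algebra_simps)
  also have "\<dots> = inner (gradf u1 - gradf u2) (u1 - u2)" unfolding c lin by simp
  finally show ?thesis using gm by simp
qed

lemma saddle_facts:
  fixes gradf :: "'a::real_inner \<Rightarrow> 'a" and A :: "'a \<Rightarrow> 'b::real_inner"
  assumes f_grad: "\<And>u. (f has_derivative (\<lambda>h. inner (gradf u) h)) (at u)"
    and A_lin: "bounded_linear A" and A_adj: "\<And>u v. inner (A u) v = inner u (Astar v)"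
    and sp: "(xs, ls) \<in> saddle_points f A b"
  shows "A xs = b" "gradf xs + Astar ls = 0"
proof -
  have s1: "\<And>l. lagrangian f A b xs l \<le> lagrangian f A b xs ls"
   and s2: "\<And>x. lagrangian f A b xs ls \<le> lagrangian f A b x ls"
    using sp unfolding saddle_points_def by auto
  define w where "w = A xs - b"
  have "inner (ls + w) w \<le> inner ls w"
    using s1[of "ls + w"] unfolding lagrangian_def w_def by simp
  then have "inner w w \<le> 0" by (simp add: inner_add_left)
  then have "w = 0" by (metis inner_eq_zero_iff inner_ge_zero order_antisym)
  then show "A xs = b" unfolding w_def by simp
  define g where "g x = lagrangian f A b x ls" for x
  have gd: "(g has_derivative (\<lambda>h. inner (gradf xs) h + inner ls (A h))) (at xs)"
    unfolding g_def lagrangian_def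
    by (rule derivative_eq_intros f_grad bounded_linear_imp_has_derivative[OF A_lin] | simp)+
  have "(\<lambda>h. inner (gradf xs) h + inner ls (A h)) = (\<lambda>h. 0)"
    by (rule has_derivative_local_min[OF gd]) (use s2 in \<open>simp add: g_def\<close>)
  then have "inner (gradf xs) v + inner ls (A v) = 0" for v by meson
  moreover have "inner ls (A v) = inner v (Astar ls)" for v by (metis A_adj inner_commute)
  ultimately have "inner v (gradf xs + Astar ls) = 0" for v
    by (metis inner_add_right inner_commute)
  from this[of "gradf xs + Astar ls"]
  have "inner (gradf xs + Astar ls) (gradf xs + Astar ls) = 0" .
  then show "gradf xs + Astar ls = 0" by simp
qed



lemma F_lip:
  fixes gradf :: "'a::real_inner \<Rightarrow> 'a" and A :: "'a \<Rightarrow> 'b::real_inner"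
  assumes gradf_lip: "\<And>B. bounded B \<Longrightarrow> \<exists>K. K-lipschitz_on B gradf"
    and A_lin: "bounded_linear A" and A_adj: "\<And>u v. inner (A u) v = inner u (Astar v)"
  shows "\<exists>KF\<ge>0. \<forall>a. norm (a - c) \<le> 1 \<longrightarrow>
    norm ((gradf (fst a) + Astar (snd a), b - A (fst a)) - (gradf (fst c) + Astar (snd c), b - A (fst c)))
      \<le> KF * norm (a - c)"
proof -
  obtain Kg where Kg: "Kg-lipschitz_on (cball (fst c) 1) gradf" using gradf_lip[of "cball (fst c) 1"] by auto
  have Kg0: "Kg \<ge> 0" using Kg unfolding lipschitz_on_def by simp
  obtain KA where KA: "KA > 0" "\<And>u. norm (A u) \<le> norm u * KA"
    "\<And>v1 v2. norm (Astar v1 - Astar v2) \<le> KA * norm (v1 - v2)"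
    using adj_bound[OF A_lin A_adj] by blast
  have "norm ((gradf (fst a) + Astar (snd a), b - A (fst a)) - (gradf (fst c) + Astar (snd c), b - A (fst c)))
      \<le> (Kg + 2 * KA) * norm (a - c)" if ac: "norm (a - c) \<le> 1" for a
  proof -
    define du where "du = fst a - fst c"
    define dv where "dv = snd a - snd c"
    have acp: "a - c = (du, dv)" unfolding du_def dv_def by (simp add: prod_eq_iff)
    have ndu: "norm du \<le> norm (a - c)" unfolding acp by (rule norm_fst_le)
    have ndv: "norm dv \<le> norm (a - c)" unfolding acp by (rule norm_snd_le)
    have ina: "fst a \<in> cball (fst c) 1" using ndu ac unfolding du_def by (simp add: dist_norm norm_minus_commute)
    have inc: "fst c \<in> cball (fst c) 1" by simp
    have g: "norm (gradf (fst a) - gradf (fst c)) \<le> Kg * norm du"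
      using lipschitz_onD[OF Kg ina inc] unfolding du_def by (simp add: dist_norm)
    have Alin: "A (fst a) - A (fst c) = A du" unfolding du_def
      using A_lin by (simp add: linear_diff bounded_linear.linear)
    have eq: "(gradf (fst a) + Astar (snd a), b - A (fst a)) - (gradf (fst c) + Astar (snd c), b - A (fst c))
        = ((gradf (fst a) - gradf (fst c)) + (Astar (snd a) - Astar (snd c)), - (A (fst a) - A (fst c)))"
      by (simp add: prod_eq_iff algebra_simps)
    have "norm (((gradf (fst a) - gradf (fst c)) + (Astar (snd a) - Astar (snd c)), - (A (fst a) - A (fst c))))
       \<le> norm ((gradf (fst a) - gradf (fst c)) + (Astar (snd a) - Astar (snd c))) + norm (- (A (fst a) - A (fst c)))"
      by (rule norm_Pair_le)
    also have "\<dots> \<le> (norm (gradf (fst a) - gradf (fst c)) + norm (Astar (snd a) - Astar (snd c))) + norm (A du)"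
      unfolding Alin norm_minus_cancel by (intro add_mono norm_triangle_ineq order_refl)
    also have "\<dots> \<le> (Kg * norm du + KA * norm dv) + norm du * KA"
      using g KA(3)[of "snd a" "snd c"] KA(2)[of du] unfolding dv_def by (intro add_mono) auto
    also have "\<dots> \<le> (Kg * norm (a - c) + KA * norm (a - c)) + norm (a - c) * KA"
      using ndu ndv Kg0 KA by (intro add_mono mult_left_mono mult_right_mono) auto
    also have "\<dots> = (Kg + 2 * KA) * norm (a - c)" by (simp add: algebra_simps)
    finally show ?thesis unfolding eq .
  qed
  moreover have "Kg + 2 * KA \<ge> 0" using Kg0 KA by simp
  ultimately show ?thesis by blast
qed

theorem proposition4p2:
  fixes f :: "'a::{real_inner,complete_space} \<Rightarrow> real"
    and gradf :: "'a \<Rightarrow> 'a"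
    and A :: "'a \<Rightarrow> 'b::{real_inner,complete_space}"
    and Astar :: "'b \<Rightarrow> 'a"
    and b :: 'b
    and eps eps' eps'' :: "real \<Rightarrow> real"
    and t0 :: real
    and x x' :: "real \<Rightarrow> 'a"
    and l l' :: "real \<Rightarrow> 'b"
  assumes f_convex: "convex_on UNIV f"
    and f_grad: "\<And>u. (f has_derivative (\<lambda>h. inner (gradf u) h)) (at u)"
    and gradf_cont: "continuous_on UNIV gradf"
    and gradf_lip: "\<And>B. bounded B \<Longrightarrow> \<exists>K. K-lipschitz_on B gradf"
    and A_lin: "bounded_linear A"
    and A_adj: "\<And>u v. inner (A u) v = inner u (Astar v)"
    and t0_nonneg: "t0 \<ge> 0"
    and eps_pos: "\<And>t. t \<ge> t0 \<Longrightarrow> eps t > 0"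
    and eps_d1: "\<And>t. t \<ge> t0 \<Longrightarrow> (eps has_real_derivative eps' t) (at t within {t0..})"
    and eps_d2: "\<And>t. t \<ge> t0 \<Longrightarrow> (eps' has_real_derivative eps'' t) (at t within {t0..})"
    and eps''_cont: "continuous_on {t0..} eps''"
    and eps_lim: "(eps \<longlongrightarrow> 0) at_top"
    and saddle_ne: "saddle_points f A b \<noteq> {}"
    and x_d: "\<And>t. t \<ge> t0 \<Longrightarrow> (x has_vector_derivative x' t) (at t within {t0..})"
    and l_d: "\<And>t. t \<ge> t0 \<Longrightarrow> (l has_vector_derivative l' t) (at t within {t0..})"
    and x'_cont: "continuous_on {t0..} x'"
    and l'_cont: "continuous_on {t0..} l'"
    and eq1: "\<And>t. t \<ge> t0 \<Longrightarrow> x' t + gradf (x t) + Astar (l t) + eps t *\<^sub>R x t = 0"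
    and eq2: "\<And>t. t \<ge> t0 \<Longrightarrow> l' t + b - A (x t) + eps t *\<^sub>R l t = 0"
    and eps_cond: "\<exists>tp\<ge>t0. \<forall>t\<ge>tp. (eps t)\<^sup>2 + eps' t \<ge> 0 \<and> 2 * eps t * eps' t + eps'' t \<le> 0"
  shows "(\<lambda>t. (norm (x' t, l' t))\<^sup>2)
           \<in> O[at_top](\<lambda>t. exp (- 2 * integral {t0..t} eps) + (eps t)\<^sup>2)"
proof -
  define F :: "'a \<times> 'b \<Rightarrow> 'a \<times> 'b" where "F p = (gradf (fst p) + Astar (snd p), b - A (fst p))" for p
  define Z where "Z t = (x t, l t)" for t
  define Z' where "Z' t = (x' t, l' t)" for t
  obtain xs ls where sp: "(xs, ls) \<in> saddle_points f A b" using saddle_ne by auto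
  have Fzs: "F (xs, ls) = 0"
    using saddle_facts[OF f_grad A_lin A_adj sp] unfolding F_def by (simp add: zero_prod_def)
  have mono: "inner (F u - F v) (u - v) \<ge> 0" for u v
    using F_mono[OF f_convex f_grad A_lin A_adj, of "fst u" "snd u" b "fst v" "snd v"]
    unfolding F_def by simp
  have Zd: "(Z has_vector_derivative Z' t) (at t within {t0..})" if "t \<ge> t0" for t
    unfolding Z_def Z'_def by (rule has_vector_derivative_Pair[OF x_d[OF that] l_d[OF that]])
  have Z'c: "continuous_on {t0..} Z'"
    unfolding Z'_def by (intro continuous_on_Pair x'_cont l'_cont)
  have eq: "Z' t = - F (Z t) - eps t *\<^sub>R Z t" if "t \<ge> t0" for t
  proof -
    have a: "x' t = - (gradf (x t) + Astar (l t)) - eps t *\<^sub>R x t"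
    proof -
      have "x' t = (x' t + gradf (x t) + Astar (l t) + eps t *\<^sub>R x t) - (gradf (x t) + Astar (l t)) - eps t *\<^sub>R x t"
        by (simp add: algebra_simps)
      then show ?thesis using eq1[OF that] by simp
    qed
    have c: "l' t = - (b - A (x t)) - eps t *\<^sub>R l t"
    proof -
      have "l' t = (l' t + b - A (x t) + eps t *\<^sub>R l t) - (b - A (x t)) - eps t *\<^sub>R l t"
        by (simp add: algebra_simps)
      then show ?thesis using eq2[OF that] by simp
    qed
    show ?thesis unfolding Z'_def Z_def F_def using a c by (simp add: prod_eq_iff)
  qed
  have lip: "\<exists>K. eventually (\<lambda>h. norm (Z' (t+h) - Z' t) \<le> K * h) (at_right 0)" if t: "t \<ge> t0" for t
  proof -
    obtain KF where KF: "KF \<ge> 0" "\<And>a. norm (a - Z t) \<le> 1 \<Longrightarrow> norm (F a - F (Z t)) \<le> KF * norm (a - Z t)"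
      using F_lip[OF gradf_lip A_lin A_adj, of "Z t" b] unfolding F_def by blast
    show ?thesis by (rule lip_from[OF t KF Zd eps_d1 eq])
  qed
  have "(\<lambda>t. (norm (Z' t))\<^sup>2) \<in> O[at_top](\<lambda>t. exp (- 2 * integral {t0..t} eps) + (eps t)\<^sup>2)"
    by (rule abstract_bound[OF mono Fzs eps_pos eps_d1 eps_d2 Zd Z'c eq lip eps_cond])
  then show ?thesis unfolding Z'_def .
qed

end
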